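(* Let $A$ be a word-topic matrix, $\delta\ge0$, $B$ a $\delta$-biased minimum variance inverse of $A$, and let $x^*\in\mathcal{S}_k$ be $r$-sparse. Let $\epsilon>4\delta r$ and suppose $n\ge 64\,\lambda_\delta(A)^2r^2\log k/\epsilon^2$. If $y$ is a document of $n$ words generated from $x^*$, then with probability at least $1-2/k$ the output $x$ of the Thresholded Linear Inverse algorithm on input $(y,B)$ satisfies $\|x-x^*\|_1\le\epsilon$.
   Context: A word-topic matrix is a matrix $A\in\mathbb{R}^{D\times k}$ with nonnegative entries whose columns each sum to $1$. $\mathcal{S}_k=\{z\in\mathbb{R}^k_{\ge0}:\sum_i z_i=1\}$. A document of $n$ words generated from $x\in\mathcal{S}_k$ consists of words drawn i.i.d. from the categorical distribution on $[D]$ with probabilities $Ax$; its count vector $y\in\mathbb{R}^D$ records how many times each word occurs. For a matrix $M$, $\|M\|_{\max}=\max_{i,j}|M_{ij}|$. $\lambda_\delta(A)$ is the optimal value of: minimize $\|B\|_{\max}$ over $B\in\mathbb{R}^{k\times D}$ subject to $\|BA-I_k\|_{\max}\le\delta$; a $\delta$-biased minimum variance inverse is a matrix $B$ with $\|BA-I_k\|_{\max}\le\delta$ and $\|B\|_{\max}=\lambda_\delta(A)$. The Thresholded Linear Inverse algorithm, given $y$ and $B$: computes $\hat x=\frac1n By$; sets $\tau=2\lambda_\delta(A)\sqrt{(\log k)/n}+\delta$; outputs $x\in\mathbb{R}^k$ with $x_i=0$ if $\hat x_i<\tau$ and $x_i=\hat x_i$ otherwise. A vector is $r$-sparse if it has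 at most $r$ nonzero entries. *)

theory Defs
  imports "HOL-Analysis.Analysis" "HOL-Probability.Probability"
begin

text \<open>Topics are indexed by the finite type 'k (so k = CARD('k)),
  words by the finite type 'd (so D = CARD('d)).
  A word-topic matrix A has D rows and k columns: A :: real^'k^'d.\<close>

definition max_norm :: "real^'n::finite^'m::finite \<Rightarrow> real" where
  "max_norm M = Max {\<bar>M $ i $ j\<bar> | i j. True}"

definition word_topic :: "real^'k::finite^'d::finite \<Rightarrow> bool" where
  "word_topic A \<longleftrightarrow> (\<forall>i j. A $ i $ j \<ge> 0) \<and> (\<forall>j. (\<Sum>i\<in>UNIV. A $ i $ j) = 1)"

definition topic_simplex :: "(real^'k::finite) set" where
  "topic_simplex = {z. (\<forall>i. z $ i \<ge> 0) \<and> (\<Sum>i\<in>UNIV. z $ i) = 1}"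

definition lambda_delta :: "real^'k::finite^'d::finite \<Rightarrow> real \<Rightarrow> real" where
  "lambda_delta A \<delta> =
     Inf {max_norm B | B :: real^'d^'k. max_norm (B ** A - mat 1) \<le> \<delta>}"

definition min_var_inverse :: "real^'k::finite^'d::finite \<Rightarrow> real \<Rightarrow> real^'d^'k \<Rightarrow> bool" where
  "min_var_inverse A \<delta> B \<longleftrightarrow>
     max_norm (B ** A - mat 1) \<le> \<delta> \<and> max_norm B = lambda_delta A \<delta>"

definition sparse :: "nat \<Rightarrow> real^'k::finite \<Rightarrow> bool" where
  "sparse r z \<longleftrightarrow> card {i. z $ i \<noteq> 0} \<le> r"

definition word_dist :: "real^'k::finite^'d::finite \<Rightarrow> real^'k \<Rightarrow> 'd pmf" where
  "word_dist A x = embed_pmf (\<lambda>w. (A *v x) $ w)"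

definition document :: "nat \<Rightarrow> real^'k::finite^'d::finite \<Rightarrow> real^'k \<Rightarrow> (nat \<Rightarrow> 'd) pmf" where
  "document n A x = Pi_pmf {..<n} undefined (\<lambda>_. word_dist A x)"

definition count_vec :: "nat \<Rightarrow> (nat \<Rightarrow> 'd::finite) \<Rightarrow> real^'d" where
  "count_vec n doc = (\<chi> w. real (card {i. i < n \<and> doc i = w}))"

definition TLI :: "real^'k::finite^'d::finite \<Rightarrow> real \<Rightarrow> nat \<Rightarrow> real^'d \<Rightarrow> real^'d^'k \<Rightarrow> real^'k" where
  "TLI A \<delta> n y B =
     (let xh = (1 / real n) *\<^sub>R (B *v y);
          \<tau> = 2 * lambda_delta A \<delta> * sqrt (ln (real CARD('k)) / real n) + \<delta>
      in \<chi> i. if xh $ i < \<tau> then 0 else xh $ i)"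

definition l1_norm :: "real^'k::finite \<Rightarrow> real" where
  "l1_norm z = (\<Sum>i\<in>UNIV. \<bar>z $ i\<bar>)"

end

theory Submission
  imports Defs
begin

lemma max_norm_ge: "\<bar>M $ i $ j\<bar> \<le> max_norm (M :: real^'n::finite^'m::finite)"
proof -
  have "{\<bar>M $ i $ j\<bar> | i j. True} = (\<lambda>(i,j). \<bar>M $ i $ j\<bar>) ` UNIV" by auto
  hence "finite {\<bar>M $ i $ j\<bar> | i j. True}" by simp
  thus ?thesis unfolding max_norm_def by (intro Max_ge) auto
qed

lemma pmf_word_dist:
  assumes "word_topic A" "x \<in> topic_simplex"
  shows "pmf (word_dist A x) w = (A *v x) $ w"
proof -
  have nn: "\<And>w. 0 \<le> (A *v x) $ w"
    using assms unfolding word_topic_def topic_simplex_def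
    by (auto simp: matrix_vector_mult_def intro!: sum_nonneg)
  have "(\<Sum>w\<in>UNIV. (A *v x) $ w) = (\<Sum>w\<in>UNIV. \<Sum>j\<in>UNIV. A $ w $ j * x $ j)"
    by (simp add: matrix_vector_mult_def)
  also have "\<dots> = (\<Sum>j\<in>UNIV. (\<Sum>w\<in>UNIV. A $ w $ j) * x $ j)"
    by (subst sum.swap) (simp add: sum_distrib_right)
  also have "\<dots> = 1" using assms unfolding word_topic_def topic_simplex_def by simp
  finally have s: "(\<Sum>w\<in>UNIV. (A *v x) $ w) = 1" .
  have p: "(\<integral>\<^sup>+w. ennreal ((A *v x) $ w) \<partial>count_space UNIV) = 1"
    by (subst nn_integral_count_space_finite) (auto simp: s[symmetric] nn sum_ennreal)
  show ?thesis unfolding word_dist_def by (rule pmf_embed_pmf[OF nn p])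
qed

lemma count_vec_mult:
  fixes B :: "real^'d::finite^'k::finite"
  shows "(B *v count_vec n doc) $ i = (\<Sum>j<n. B $ i $ (doc j))"
proof -
  have c: "real (card {j. j < n \<and> doc j = w}) = (\<Sum>j<n. if doc j = w then 1 else 0)" for w
    by (simp add: sum.If_cases Int_def conj_commute)
  have "(B *v count_vec n doc) $ i = (\<Sum>w\<in>UNIV. B $ i $ w * (\<Sum>j<n. if doc j = w then 1 else 0))"
    by (simp add: matrix_vector_mult_def count_vec_def c)
  also have "\<dots> = (\<Sum>j<n. \<Sum>w\<in>UNIV. if doc j = w then B $ i $ w else 0)"
    by (subst sum_distrib_left, subst sum.swap) (auto intro!: sum.cong)
  also have "\<dots> = (\<Sum>j<n. B $ i $ (doc j))" by simp
  finally show ?thesis .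
qed

lemma hoeff:
  fixes W :: "'d pmf" and f :: "'d \<Rightarrow> real"
  assumes L: "L > 0" and fb: "\<And>w. \<bar>f w\<bar> \<le> L" and n: "n > 0" and t: "t \<ge> 0"
  shows "measure_pmf.prob (Pi_pmf {..<n} dflt (\<lambda>_. W))
     {doc. \<bar>(\<Sum>j<n. f (doc j)) - real n * measure_pmf.expectation W f\<bar> \<ge> real n * t}
     \<le> 2 * exp (- real n * t\<^sup>2 / (2 * L\<^sup>2))"
proof -
  let ?P = "Pi_pmf {..<n} dflt (\<lambda>_. W)"
  have ex: "measure_pmf.expectation ?P (\<lambda>doc. f (doc j)) = measure_pmf.expectation W f" if "j < n" for j
  proof -
    have "measure_pmf.expectation ?P (\<lambda>doc. f (doc j)) = measure_pmf.expectation (map_pmf (\<lambda>doc. doc j) ?P) f"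
      by simp
    also have "map_pmf (\<lambda>doc. doc j) ?P = W" using that by (subst Pi_pmf_component) auto
    finally show ?thesis .
  qed
  have ind: "prob_space.indep_vars (measure_pmf ?P) (\<lambda>_. borel) (\<lambda>j doc. f (doc j)) {..<n}"
    using prob_space.indep_vars_compose2[OF measure_pmf.prob_space_axioms indep_vars_Pi_pmf[of "{..<n}" dflt "\<lambda>_. W"], of "\<lambda>_ w. f w" "\<lambda>_. borel"]
    by simp
  interpret H: Hoeffding_ineq "measure_pmf ?P" "{..<n}" "\<lambda>j doc. f (doc j)" "\<lambda>_. -L" "\<lambda>_. L"
     "(\<Sum>j<n. measure_pmf.expectation ?P (\<lambda>doc. f (doc j)))"
  proof unfold_locales
    show "prob_space.indep_vars (measure_pmf ?P) (\<lambda>_. borel) (\<lambda>j doc. f (doc j)) {..<n}" by (rule ind)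
    fix i show "AE x in measure_pmf ?P. f (x i) \<in> {-L..L}"
      using fb by (intro AE_I2) (smt (verit) atLeastAtMost_iff)
  qed simp
  have mu: "(\<Sum>j<n. measure_pmf.expectation ?P (\<lambda>doc. f (doc j))) = real n * measure_pmf.expectation W f"
    by (simp add: ex)
  have pos: "(\<Sum>j<n. (L - - L)\<^sup>2) > 0" using L n by simp
  have "measure_pmf.prob ?P {doc. \<bar>(\<Sum>j<n. f (doc j)) - real n * measure_pmf.expectation W f\<bar> \<ge> real n * t}
     \<le> 2 * exp (-2 * (real n * t)\<^sup>2 / (\<Sum>j<n. (L - - L)\<^sup>2))"
    using H.Hoeffding_ineq_abs_ge[OF _ pos, of "real n * t"] t mu by simp
  also have "-2 * (real n * t)\<^sup>2 / (\<Sum>j<n. (L - - L)\<^sup>2) = - real n * t\<^sup>2 / (2 * L\<^sup>2)"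
    using L n by (simp add: power2_eq_square field_simps)
  finally show ?thesis .
qed
lemma det:
  fixes xh m xs :: "real^'k::finite"
  assumes d1: "\<And>i. \<bar>xh$i - m$i\<bar> < t" and d2: "\<And>i. \<bar>m$i - xs$i\<bar> \<le> \<delta>"
    and nn: "\<And>i. xs$i \<ge> 0" and sp: "card {i. xs$i \<noteq> 0} \<le> r"
    and t: "t \<ge> 0" and d: "\<delta> \<ge> 0" and e: "2 * real r * (t + \<delta>) \<le> \<epsilon>"
  shows "l1_norm ((\<chi> i. if xh$i < t + \<delta> then 0 else xh$i) - xs) \<le> \<epsilon>"
proof -
  let ?x = "(\<chi> i. if xh$i < t + \<delta> then 0 else xh$i) :: real^'k"
  let ?S = "{i. xs$i \<noteq> 0}"
  have z: "\<bar>?x$i - xs$i\<bar> = 0" if "i \<notin> ?S" for i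
  proof -
    have "xh$i < t + \<delta>" using d1[of i] d2[of i] that by auto
    thus ?thesis using that by simp
  qed
  have b: "\<bar>?x$i - xs$i\<bar> \<le> 2 * (t + \<delta>)" for i
    using d1[of i] d2[of i] nn[of i] t d by (auto simp: abs_le_iff abs_less_iff)
  have "l1_norm (?x - xs) = (\<Sum>i\<in>UNIV. \<bar>?x$i - xs$i\<bar>)" by (simp add: l1_norm_def)
  also have "\<dots> = (\<Sum>i\<in>?S. \<bar>?x$i - xs$i\<bar>)"
    by (rule sum.mono_neutral_right) (use z in auto)
  also have "\<dots> \<le> (\<Sum>i\<in>?S. 2 * (t + \<delta>))" by (rule sum_mono) (rule b)
  also have "\<dots> = real (card ?S) * (2 * (t + \<delta>))" by simp
  also have "\<dots> \<le> real r * (2 * (t + \<delta>))"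
    using sp t d by (intro mult_right_mono) auto
  finally show ?thesis using e by (simp add: mult_ac)
qed

lemma bias:
  fixes C :: "real^'k::finite^'k" and xs :: "real^'k"
  assumes "max_norm (C - mat 1) \<le> \<delta>" "xs \<in> topic_simplex"
  shows "\<bar>(C *v xs)$i - xs$i\<bar> \<le> \<delta>"
proof -
  have "(C *v xs)$i - xs$i = ((C - mat 1) *v xs)$i"
    by (simp add: matrix_vector_mult_diff_rdistrib)
  also have "\<dots> = (\<Sum>j\<in>UNIV. (C - mat 1)$i$j * xs$j)" by (simp add: matrix_vector_mult_def)
  finally have e: "(C *v xs)$i - xs$i = (\<Sum>j\<in>UNIV. (C - mat 1)$i$j * xs$j)" .
  have "\<bar>\<Sum>j\<in>UNIV. (C - mat 1)$i$j * xs$j\<bar> \<le> (\<Sum>j\<in>UNIV. \<bar>(C - mat 1)$i$j * xs$j\<bar>)"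
    by (rule sum_abs)
  also have "\<dots> \<le> (\<Sum>j\<in>UNIV. \<delta> * xs$j)"
  proof (rule sum_mono)
    fix j
    have "\<bar>(C - mat 1)$i$j\<bar> \<le> max_norm (C - mat 1)"
    proof -
      have "{\<bar>(C - mat 1) $ i $ j\<bar> | i j. True} = (\<lambda>(i,j). \<bar>(C - mat 1) $ i $ j\<bar>) ` UNIV" by auto
      hence "finite {\<bar>(C - mat 1) $ i $ j\<bar> | i j. True}" by simp
      thus ?thesis unfolding max_norm_def by (intro Max_ge) auto
    qed
    moreover have "xs$j \<ge> 0" using assms(2) by (simp add: topic_simplex_def)
    ultimately show "\<bar>(C - mat 1)$i$j * xs$j\<bar> \<le> \<delta> * xs$j"
      using assms(1) by (simp add: abs_mult mult_right_mono)
  qed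
  also have "\<dots> = \<delta>" using assms(2) by (simp add: topic_simplex_def flip: sum_distrib_left)
  finally show ?thesis using e by simp
qed
theorem theorem4p1:
  fixes A :: "real^'k::finite^'d::finite"
    and B :: "real^'d^'k"
    and xs :: "real^'k"
    and \<delta> \<epsilon> :: real and r n :: nat
  assumes "word_topic A"
    and "\<delta> \<ge> 0"
    and "min_var_inverse A \<delta> B"
    and "xs \<in> topic_simplex"
    and "sparse r xs"
    and "\<epsilon> > 4 * \<delta> * real r"
    and "real n \<ge> 64 * (lambda_delta A \<delta>)^2 * (real r)^2 * ln (real CARD('k)) / \<epsilon>^2"
  shows "measure_pmf.prob (document n A xs)
           {doc. l1_norm (TLI A \<delta> n (count_vec n doc) B - xs) \<le> \<epsilon>}
         \<ge> 1 - 2 / real CARD('k)"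
proof -
  note wt = assms(1) and d0 = assms(2) and mv = assms(3) and xsS = assms(4) and sp = assms(5)
    and eps = assms(6) and nbig = assms(7)
  define L where "L = lambda_delta A \<delta>"
  define k where "k = real CARD('k)"
  let ?P = "document n A xs"
  let ?G = "{doc. l1_norm (TLI A \<delta> n (count_vec n doc) B - xs) \<le> \<epsilon>}"
  have LB: "L = max_norm B" using mv by (simp add: min_var_inverse_def L_def)
  have bias0: "max_norm (B ** A - mat 1) \<le> \<delta>" using mv by (simp add: min_var_inverse_def)
  have Bb: "\<bar>B$i$w\<bar> \<le> L" for i w using max_norm_ge[of B i w] LB by simp
  have L0: "L \<ge> 0" using Bb[of undefined undefined] by linarith
  have nnx: "\<And>i. xs$i \<ge> 0" and sum1: "(\<Sum>i\<in>UNIV. xs$i) = 1"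
    using xsS by (auto simp: topic_simplex_def)
  have spc: "card {i. xs$i \<noteq> 0} \<le> r" using sp by (simp add: sparse_def)
  have r1: "r \<ge> 1"
  proof (rule ccontr)
    assume "\<not> r \<ge> 1"
    hence "r = 0" by simp
    hence "card {i. xs$i \<noteq> 0} = 0" using spc by (metis le_zero_eq)
    hence "{i. xs$i \<noteq> 0} = {}" by simp
    hence "\<And>i. xs$i = 0" by auto
    thus False using sum1 by simp
  qed
  have epos: "\<epsilon> > 0" using eps d0 by (smt (verit) mult_nonneg_nonneg of_nat_0_le_iff)
  show ?thesis
  proof (cases "k \<le> 2")
    case True
    hence "1 - 2 / real CARD('k) \<le> 0" unfolding k_def by (simp add: field_simps)
    thus ?thesis by (smt (verit) measure_nonneg)
  next
    case k3: False
    show ?thesis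
    proof (cases "L = 0")
      case True
      hence B0: "B$i$w = 0" for i w using Bb[of i w] by simp
      have "B = 0" using B0 by (simp add: vec_eq_iff)
      have "\<bar>(B ** A - mat 1)$i$i\<bar> = 1" for i using \<open>B = 0\<close> by (simp add: mat_def)
      hence d1: "\<delta> \<ge> 1" using max_norm_ge[of "B ** A - mat 1" undefined undefined] bias0 by simp
      have "?G = UNIV"
      proof safe
        fix doc
        have ld: "lambda_delta A \<delta> = 0" using True by (simp add: L_def)
        have z: "(0::real^'d^'k) *v count_vec n doc = 0"
          by (simp add: vec_eq_iff matrix_vector_mult_def)
        have "TLI A \<delta> n (count_vec n doc) B = 0"
          unfolding TLI_def Let_def ld \<open>B = 0\<close> z using d1 by (simp add: vec_eq_iff)
        moreover have "l1_norm (0 - xs) = 1" using nnx sum1 by (simp add: l1_norm_def)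
        moreover have "1 \<le> \<epsilon>"
        proof -
          have "(1::real) * 1 \<le> \<delta> * real r" by (rule mult_mono) (use d1 r1 in auto)
          thus ?thesis using eps by linarith
        qed
        ultimately show "l1_norm (TLI A \<delta> n (count_vec n doc) B - xs) \<le> \<epsilon>" by simp
      qed simp
      thus ?thesis by (simp add: measure_pmf.prob_space)
    next
      case Lpos: False
      hence Lp: "L > 0" using L0 by simp
      have lnk: "ln k > 0" using k3 by simp
      have "64 * L^2 * (real r)^2 * ln k / \<epsilon>^2 > 0"
        using Lp r1 lnk epos by (intro divide_pos_pos mult_pos_pos) auto
      hence npos: "n > 0" using nbig unfolding L_def k_def by linarith
      define t where "t = 2 * L * sqrt (ln k / real n)"
      have t0: "t \<ge> 0" using Lp lnk unfolding t_def by simp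
      have t2: "t^2 = 4 * L^2 * ln k / real n"
        unfolding t_def using lnk npos by (simp add: power_mult_distrib)
      have tle: "t \<le> \<epsilon> / (4 * real r)"
      proof -
        have X: "64 * L^2 * (real r)^2 * ln k \<le> real n * \<epsilon>^2"
          using nbig epos unfolding L_def k_def by (simp add: pos_divide_le_eq)
        have "t^2 = (64 * L^2 * (real r)^2 * ln k / real n) / (16 * (real r)^2)"
          unfolding t2 using r1 by (simp add: field_simps)
        also have "\<dots> \<le> (real n * \<epsilon>^2 / real n) / (16 * (real r)^2)"
          using X npos by (intro divide_right_mono) auto
        also have "\<dots> = (\<epsilon> / (4 * real r))^2" using npos by (simp add: power2_eq_square field_simps)
        finally have "t^2 \<le> (\<epsilon> / (4 * real r))^2" .
        moreover have "\<epsilon> / (4 * real r) \<ge> 0" using epos by simp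
        ultimately show ?thesis using t0 by (simp add: power_mono_iff)
      qed
      have e2: "2 * real r * (t + \<delta>) \<le> \<epsilon>"
      proof -
        have "2 * real r * t \<le> \<epsilon> / 2" using tle r1 by (simp add: field_simps)
        thus ?thesis using eps by (simp add: algebra_simps)
      qed
      define W where "W = word_dist A xs"
      define m where "m = (\<chi> i. measure_pmf.expectation W (\<lambda>w. B$i$w))"
      have mval: "m $ i = ((B ** A) *v xs)$i" for i
      proof -
        have "m $ i = (\<Sum>w\<in>UNIV. B$i$w * pmf W w)"
          unfolding m_def by (simp add: integral_measure_pmf_real[of UNIV])
        also have "\<dots> = (B *v (A *v xs))$i"
          unfolding W_def using wt xsS by (simp add: pmf_word_dist matrix_vector_mult_def)
        finally show ?thesis by (simp add: matrix_vector_mul_assoc)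
      qed
      have mb: "\<bar>m$i - xs$i\<bar> \<le> \<delta>" for i
        using bias[OF bias0 xsS, of i] mval by simp
      define Bad where "Bad i = {doc. \<bar>(\<Sum>j<n. B$i$(doc j)) - real n * m$i\<bar> \<ge> real n * t}" for i
      have PB: "measure_pmf.prob ?P (Bad i) \<le> 2 / k^2" for i
      proof -
        have "measure_pmf.prob ?P (Bad i) \<le> 2 * exp (- real n * t\<^sup>2 / (2 * L\<^sup>2))"
          unfolding Bad_def document_def m_def W_def
          using hoeff[OF Lp, of "\<lambda>w. B$i$w" n t undefined "word_dist A xs"] Bb npos t0 by simp
        also have "- real n * t\<^sup>2 / (2 * L\<^sup>2) = - 2 * ln k"
          unfolding t2 using npos Lp by (simp add: field_simps power2_eq_square)
        also have "exp (- 2 * ln k) = 1 / k^2"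
        proof -
          have "exp (- 2 * ln k) = inverse (exp (ln k) ^ 2)"
            by (simp add: exp_minus exp_of_nat_mult[symmetric])
          thus ?thesis using k3 by (simp add: inverse_eq_divide)
        qed
        finally show ?thesis by simp
      qed
      have PU: "measure_pmf.prob ?P (\<Union>i. Bad i) \<le> 2 / k"
      proof -
        have "measure_pmf.prob ?P (\<Union>i. Bad i) \<le> (\<Sum>i\<in>UNIV. measure_pmf.prob ?P (Bad i))"
          by (rule measure_pmf.finite_measure_subadditive_finite) auto
        also have "\<dots> \<le> (\<Sum>i\<in>(UNIV::'k set). 2 / k^2)" by (rule sum_mono) (rule PB)
        also have "\<dots> = 2 / k" unfolding k_def using k3 by (simp add: power2_eq_square)
        finally show ?thesis .
      qed
      have sub: "UNIV - (\<Union>i. Bad i) \<subseteq> ?G"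
      proof safe
        fix doc assume nb: "doc \<notin> (\<Union>i. Bad i)"
        define xh where "xh = (1 / real n) *\<^sub>R (B *v count_vec n doc)"
        have d1: "\<bar>xh$i - m$i\<bar> < t" for i
        proof -
          have lt: "\<bar>(\<Sum>j<n. B$i$(doc j)) - real n * m$i\<bar> < real n * t" using nb by (simp add: Bad_def not_le)
          have xe: "xh$i = (\<Sum>j<n. B$i$(doc j)) / real n"
            by (simp add: xh_def count_vec_mult)
          have "xh$i - m$i = ((\<Sum>j<n. B$i$(doc j)) - real n * m$i) / real n"
            using npos xe by (simp add: field_simps)
          hence eq: "\<bar>xh$i - m$i\<bar> = \<bar>(\<Sum>j<n. B$i$(doc j)) - real n * m$i\<bar> / real n"
            by (simp add: abs_divide)
          have "\<bar>(\<Sum>j<n. B$i$(doc j)) - real n * m$i\<bar> / real n < real n * t / real n"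
            using lt npos by (intro divide_strict_right_mono) auto
          thus ?thesis using npos eq by simp
        qed
        have "TLI A \<delta> n (count_vec n doc) B = (\<chi> i. if xh$i < t + \<delta> then 0 else xh$i)"
          unfolding TLI_def Let_def xh_def t_def L_def k_def by (rule refl)
        thus "l1_norm (TLI A \<delta> n (count_vec n doc) B - xs) \<le> \<epsilon>"
          using det[OF d1 mb nnx spc t0 d0 e2] by simp
      qed
      have "measure_pmf.prob ?P ?G \<ge> measure_pmf.prob ?P (UNIV - (\<Union>i. Bad i))"
        by (rule measure_pmf.finite_measure_mono[OF sub]) simp
      moreover have "measure_pmf.prob ?P (UNIV - (\<Union>i. Bad i)) = 1 - measure_pmf.prob ?P (\<Union>i. Bad i)"
        using measure_pmf.prob_compl[of "\<Union>i. Bad i" ?P] by simp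
      ultimately show ?thesis using PU unfolding k_def by linarith
    qed
  qed
qed

end
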